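(* For $i,j\in\{1,\dots,d\}$ and $y\in(-1,1)$ let $$z_{ij}(y)=\Big(\sum_{n_0,n_1\ge0}\exp\Big(-\tfrac12\big(Q_{i,n_0}^2+Q_{j,n_1}^2-2yQ_{i,n_0}Q_{j,n_1}\big)\Big)\Big)^{-1}.$$ Then the matrix $(-z_{ij}'(0))_{i,j=1}^d$ is positive semidefinite, and for each $i$, $$|z_{ii}'(0)|\le\frac{(m_i^{(1)}(1))^2}{(m_i^{(0)}(1))^4}.$$
   Context: For each $i$, $Q_{i,n}=\Phi^{-1}(P[X_{i,t}\le n])$ where $X_{i,t}$ is $\mathbb N_0$-valued and $\Phi$ is the standard normal CDF (summands with $Q=\pm\infty$ are $0$). $m_i^{(k)}(u)=\frac1{\sqrt{2\pi}}\sum_{n\ge0}e^{-Q_{i,n}^2/(2u)}|Q_{i,n}|^k$. It is assumed that the relevant series $m_i^{(k)}(u)$ ($k\le 2$, $u$ in a neighborhood of $1$) are finite and $m_i^{(0)}(1)>0$, so that $z_{ij}$ is differentiable and termwise differentiation is valid. *)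

theory Defs
  imports "HOL-Probability.Probability"
begin

definition Phi :: "real \<Rightarrow> real" where
  "Phi x = (LBINT t:{..x}. std_normal_density t)"

definition Phi_inv :: "real \<Rightarrow> real" where
  "Phi_inv p = (THE q. Phi q = p)"

text \<open>P i is the law of the N0-valued variable X_i (same for all t).
  F i n = P[X_i <= n].  Q_{i,n} is finite iff 0 < F i n < 1.\<close>
definition Fcdf :: "(nat \<Rightarrow> nat pmf) \<Rightarrow> nat \<Rightarrow> nat \<Rightarrow> real" where
  "Fcdf P i n = measure_pmf.prob (P i) {..n}"

definition Qfin :: "(nat \<Rightarrow> nat pmf) \<Rightarrow> nat \<Rightarrow> nat \<Rightarrow> bool" where
  "Qfin P i n \<longleftrightarrow> 0 < Fcdf P i n \<and> Fcdf P i n < 1"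

definition Qv :: "(nat \<Rightarrow> nat pmf) \<Rightarrow> nat \<Rightarrow> nat \<Rightarrow> real" where
  "Qv P i n = Phi_inv (Fcdf P i n)"

text \<open>Summand of m_i^{(k)}(u) (without the 1/sqrt(2 pi) factor); zero when Q is infinite.\<close>
definition mterm :: "(nat \<Rightarrow> nat pmf) \<Rightarrow> nat \<Rightarrow> real \<Rightarrow> nat \<Rightarrow> nat \<Rightarrow> real" where
  "mterm P k u i n = (if Qfin P i n then exp (- ((Qv P i n)^2) / (2*u)) * \<bar>Qv P i n\<bar>^k else 0)"

definition mfun :: "(nat \<Rightarrow> nat pmf) \<Rightarrow> nat \<Rightarrow> real \<Rightarrow> nat \<Rightarrow> real" where
  "mfun P k u i = (1 / sqrt (2*pi)) * (\<Sum>n. mterm P k u i n)"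

definition zfun :: "(nat \<Rightarrow> nat pmf) \<Rightarrow> nat \<Rightarrow> nat \<Rightarrow> real \<Rightarrow> real" where
  "zfun P i j y = inverse (\<Sum>\<^sub>\<infinity>(n0, n1)\<in>UNIV.
      (if Qfin P i n0 \<and> Qfin P j n1 then
         exp (- (1/2) * ((Qv P i n0)^2 + (Qv P j n1)^2 - 2 * y * Qv P i n0 * Qv P j n1))
       else 0))"

definition psd_matrix :: "nat \<Rightarrow> (nat \<Rightarrow> nat \<Rightarrow> real) \<Rightarrow> bool" where
  "psd_matrix d M \<longleftrightarrow> (\<forall>i\<in>{1..d}. \<forall>j\<in>{1..d}. M i j = M j i) \<and>
     (\<forall>c :: nat \<Rightarrow> real. 0 \<le> (\<Sum>i=1..d. \<Sum>j=1..d. c i * M i j * c j))"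

end

theory Submission
  imports Defs
begin

lemma exp_rem_bound:
  fixes t :: real
  shows "\<bar>exp t - 1 - t\<bar> \<le> t^2 * exp \<bar>t\<bar>"
proof -
  have a: "exp t \<ge> 1 + t" by (rule exp_ge_add_one_self)
  have b: "exp (-t) \<ge> 1 - t" using exp_ge_add_one_self[of "-t"] by simp
  have c: "exp t - 1 \<le> t * exp t"
  proof -
    have "exp t * exp (-t) = 1" by (simp add: exp_minus)
    hence "1 \<ge> exp t * (1 - t)" using b mult_left_mono[OF b, of "exp t"] by simp
    thus ?thesis by (simp add: algebra_simps)
  qed
  have d: "exp t - 1 - t \<le> t^2 * exp \<bar>t\<bar>"
  proof (cases "t \<ge> 0")
    case True
    have "exp t - 1 - t \<le> t * (exp t - 1)" using c by (simp add: algebra_simps)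
    also have "\<dots> \<le> t * (t * exp t)" using c True mult_left_mono by blast
    finally show ?thesis using True by (simp add: power2_eq_square)
  next
    case False
    have "exp t - 1 - t \<le> t * (exp t - 1)" using c by (simp add: algebra_simps)
    also have "\<dots> = (-t) * (1 - exp t)" by (simp add: algebra_simps)
    also have "\<dots> \<le> (-t) * (-t)" using a False mult_left_mono[of "1 - exp t" "-t" "-t"] by linarith
    also have "\<dots> \<le> t^2 * exp \<bar>t\<bar>" using False by (simp add: power2_eq_square)
    finally show ?thesis .
  qed
  have "0 \<le> exp t - 1 - t" using a by linarith
  thus ?thesis using d by simp
qed

lemma prod_summ:
  fixes f h :: "nat \<Rightarrow> real"
  assumes f: "summable (\<lambda>n. \<bar>f n\<bar>)" and h: "summable (\<lambda>n. \<bar>h n\<bar>)"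
  shows "(\<lambda>(x,y). f x * h y) summable_on UNIV"
    and "infsum (\<lambda>(x,y). f x * h y) UNIV = suminf f * suminf h"
proof -
  have fs: "(f has_sum suminf f) UNIV"
    using norm_summable_imp_has_sum[of f] f summable_sums summable_norm_cancel[of f] by auto
  have hs: "(h has_sum suminf h) UNIV"
    using norm_summable_imp_has_sum[of h] h summable_sums summable_norm_cancel[of h] by auto
  have fa: "(\<lambda>n. \<bar>f n\<bar>) summable_on UNIV"
    using summable_on_UNIV_nonneg_real_iff[of "\<lambda>n. \<bar>f n\<bar>"] f by simp
  have ha: "(\<lambda>n. \<bar>h n\<bar>) summable_on UNIV"
    using summable_on_UNIV_nonneg_real_iff[of "\<lambda>n. \<bar>h n\<bar>"] h by simp
  have AS: "(\<lambda>p. norm ((\<lambda>(x,y). f x * h y) p)) summable_on Sigma UNIV (\<lambda>_. UNIV)"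
  proof (rule Infinite_Sum.abs_summable_on_Sigma_iff[THEN iffD2], intro conjI ballI)
    fix x :: nat
    show "(\<lambda>y. norm ((\<lambda>(x,y). f x * h y) (x, y))) summable_on UNIV"
      using summable_on_cmult_right[OF ha, of "\<bar>f x\<bar>"] by (simp add: abs_mult)
  next
    have "(\<lambda>x. \<bar>f x\<bar> * infsum (\<lambda>y. \<bar>h y\<bar>) UNIV) summable_on UNIV"
      using summable_on_cmult_left[OF fa] by simp
    moreover have "(\<lambda>x. infsum (\<lambda>y. norm ((\<lambda>(x,y). f x * h y) (x, y))) UNIV) = (\<lambda>x. \<bar>f x\<bar> * infsum (\<lambda>y. \<bar>h y\<bar>) UNIV)"
      by (auto simp: abs_mult infsum_cmult_right')
    moreover have "0 \<le> infsum (\<lambda>y. \<bar>h y\<bar>) UNIV" by (rule infsum_nonneg) simp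
    ultimately show "(\<lambda>x. norm (infsum (\<lambda>y. norm ((\<lambda>(x,y). f x * h y) (x, y))) UNIV)) summable_on UNIV"
    proof -
      assume s1: "(\<lambda>x. \<bar>f x\<bar> * infsum (\<lambda>y. \<bar>h y\<bar>) UNIV) summable_on UNIV"
        and e1: "(\<lambda>x. infsum (\<lambda>y. norm ((\<lambda>(x,y). f x * h y) (x, y))) UNIV) = (\<lambda>x. \<bar>f x\<bar> * infsum (\<lambda>y. \<bar>h y\<bar>) UNIV)"
        and n1: "0 \<le> infsum (\<lambda>y. \<bar>h y\<bar>) UNIV"
      have "\<And>x. norm (infsum (\<lambda>y. norm ((\<lambda>(x,y). f x * h y) (x, y))) UNIV) = \<bar>f x\<bar> * infsum (\<lambda>y. \<bar>h y\<bar>) UNIV"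
      proof -
        fix x
        have "infsum (\<lambda>y. norm ((\<lambda>(x,y). f x * h y) (x, y))) UNIV = \<bar>f x\<bar> * infsum (\<lambda>y. \<bar>h y\<bar>) UNIV"
          using e1 by (rule fun_cong)
        thus "norm (infsum (\<lambda>y. norm ((\<lambda>(x,y). f x * h y) (x, y))) UNIV) = \<bar>f x\<bar> * infsum (\<lambda>y. \<bar>h y\<bar>) UNIV"
          using n1 by (simp only: real_norm_def abs_mult abs_abs)
      qed
      hence "(\<lambda>x. norm (infsum (\<lambda>y. norm ((\<lambda>(x,y). f x * h y) (x, y))) UNIV)) = (\<lambda>x. \<bar>f x\<bar> * infsum (\<lambda>y. \<bar>h y\<bar>) UNIV)"
        by (rule ext)
      thus ?thesis using s1 by (simp only:)
    qed
  qed
  have S: "(\<lambda>(x,y). f x * h y) summable_on UNIV"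
    by (rule Infinite_Sum.abs_summable_summable[OF AS[unfolded UNIV_Times_UNIV]])
  thus "(\<lambda>(x,y). f x * h y) summable_on UNIV" .
  have "infsum (\<lambda>(x,y). f x * h y) UNIV = infsum (\<lambda>x. infsum (\<lambda>y. f x * h y) UNIV) UNIV"
    using infsum_Sigma_banach[of "\<lambda>(x,y). f x * h y" UNIV "\<lambda>_. UNIV"] S
    by (simp add: UNIV_Times_UNIV)
  also have "\<dots> = infsum (\<lambda>x. f x * suminf h) UNIV"
    using hs by (simp add: infsum_cmult_right' infsumI)
  also have "\<dots> = suminf f * suminf h"
    using fs by (simp add: infsum_cmult_left' infsumI)
  finally show "infsum (\<lambda>(x,y). f x * h y) UNIV = suminf f * suminf h" .
qed

lemma pt_bound:
  fixes aa bb y u :: real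
  assumes u: "u > 1" and y: "\<bar>y\<bar> \<le> 1 - 1/u"
  shows "\<bar>exp (-(1/2)*(aa^2 + bb^2 - 2*y*aa*bb)) - exp (-(aa^2)/2) * exp (-(bb^2)/2)
           - y * ((aa * exp (-(aa^2)/2)) * (bb * exp (-(bb^2)/2)))\<bar>
         \<le> y^2 * ((aa^2 * exp (-(aa^2)/(2*u))) * (bb^2 * exp (-(bb^2)/(2*u))))"
proof -
  define E where "E = exp (-(aa^2+bb^2)/2)"
  define t where "t = y*aa*bb"
  have E0: "E > 0" unfolding E_def by simp
  have e1: "exp (-(1/2)*(aa^2 + bb^2 - 2*y*aa*bb)) = E * exp t"
    unfolding E_def t_def exp_add[symmetric] by (rule arg_cong[where f=exp]) (simp add: field_simps)
  have e2: "exp (-(aa^2)/2) * exp (-(bb^2)/2) = E"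
    unfolding E_def exp_add[symmetric] by (rule arg_cong[where f=exp]) (simp add: field_simps)
  have "\<bar>exp (-(1/2)*(aa^2 + bb^2 - 2*y*aa*bb)) - exp (-(aa^2)/2) * exp (-(bb^2)/2)
           - y * ((aa * exp (-(aa^2)/2)) * (bb * exp (-(bb^2)/2)))\<bar> = E * \<bar>exp t - 1 - t\<bar>"
  proof -
    have "y * ((aa * exp (-(aa^2)/2)) * (bb * exp (-(bb^2)/2))) = t * (exp (-(aa^2)/2) * exp (-(bb^2)/2))"
      unfolding t_def by (simp add: algebra_simps)
    hence "exp (-(1/2)*(aa^2 + bb^2 - 2*y*aa*bb)) - exp (-(aa^2)/2) * exp (-(bb^2)/2)
           - y * ((aa * exp (-(aa^2)/2)) * (bb * exp (-(bb^2)/2))) = E * (exp t - 1 - t)"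
      using e1 e2 by (simp add: algebra_simps)
    thus ?thesis using E0 by (simp add: abs_mult)
  qed
  also have "\<dots> \<le> E * (t^2 * exp \<bar>t\<bar>)"
    using E0 exp_rem_bound[of t] by (intro mult_left_mono) auto
  also have "\<dots> = t^2 * (E * exp \<bar>t\<bar>)" by simp
  also have "\<dots> \<le> t^2 * exp (-(aa^2+bb^2)/(2*u))"
  proof (rule mult_left_mono)
    have "\<bar>t\<bar> \<le> \<bar>y\<bar> * ((aa^2+bb^2)/2)"
    proof -
      have ab: "\<bar>aa*bb\<bar> \<le> (aa^2+bb^2)/2"
      proof -
        have "(\<bar>aa\<bar> - \<bar>bb\<bar>)^2 = aa^2 + bb^2 - 2*\<bar>aa*bb\<bar>" by (simp add: power2_diff abs_mult)
        moreover have "0 \<le> (\<bar>aa\<bar> - \<bar>bb\<bar>)^2" by simp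
        ultimately have "2*\<bar>aa*bb\<bar> \<le> aa^2 + bb^2" by (metis diff_ge_0_iff_ge)
        thus ?thesis by simp
      qed
      show ?thesis unfolding t_def using mult_left_mono[OF ab, of "\<bar>y\<bar>"] by (simp add: abs_mult mult.assoc)
    qed
    also have "\<dots> \<le> (1 - 1/u) * ((aa^2+bb^2)/2)"
      using y by (intro mult_right_mono) auto
    finally have tb: "\<bar>t\<bar> \<le> (1 - 1/u) * ((aa^2+bb^2)/2)" .
    have "E * exp \<bar>t\<bar> = exp (-(aa^2+bb^2)/2 + \<bar>t\<bar>)" unfolding E_def by (simp add: exp_add)
    also have "\<dots> \<le> exp (-(aa^2+bb^2)/(2*u))"
    proof -
      have "-(aa^2+bb^2)/2 + \<bar>t\<bar> \<le> -(aa^2+bb^2)/2 + (1 - 1/u) * ((aa^2+bb^2)/2)" using tb by simp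
      also have "\<dots> = -(aa^2+bb^2)/(2*u)" using u by (simp add: field_simps)
      finally show ?thesis by simp
    qed
    finally show "E * exp \<bar>t\<bar> \<le> exp (-(aa^2+bb^2)/(2*u))" .
  qed simp
  also have "\<dots> = y^2 * ((aa^2 * exp (-(aa^2)/(2*u))) * (bb^2 * exp (-(bb^2)/(2*u))))"
  proof -
    have "exp (-(aa^2+bb^2)/(2*u)) = exp (-(aa^2)/(2*u)) * exp (-(bb^2)/(2*u))"
      unfolding exp_add[symmetric] using u by (intro arg_cong[where f=exp]) (simp add: field_simps)
    thus ?thesis unfolding t_def by (simp add: power_mult_distrib algebra_simps)
  qed
  finally show ?thesis .
qed

lemma core:
  fixes a b :: "nat \<Rightarrow> real" and pa pb :: "nat \<Rightarrow> bool" and u :: real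
  assumes u: "u > 1"
  and s0a: "summable (\<lambda>n. if pa n then exp (-((a n)^2)/2) else 0)"
  and s1a: "summable (\<lambda>n. if pa n then \<bar>a n\<bar> * exp (-((a n)^2)/2) else 0)"
  and s2a: "summable (\<lambda>n. if pa n then (a n)^2 * exp (-((a n)^2)/(2*u)) else 0)"
  and s0b: "summable (\<lambda>n. if pb n then exp (-((b n)^2)/2) else 0)"
  and s1b: "summable (\<lambda>n. if pb n then \<bar>b n\<bar> * exp (-((b n)^2)/2) else 0)"
  and s2b: "summable (\<lambda>n. if pb n then (b n)^2 * exp (-((b n)^2)/(2*u)) else 0)"
  and Aa: "suminf (\<lambda>n. if pa n then exp (-((a n)^2)/2) else 0) > 0"
  and Ab: "suminf (\<lambda>n. if pb n then exp (-((b n)^2)/2) else 0) > 0"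
  shows "((\<lambda>y. inverse (\<Sum>\<^sub>\<infinity>(n0, n1)\<in>UNIV. (if pa n0 \<and> pb n1 then
         exp (- (1/2) * ((a n0)^2 + (b n1)^2 - 2 * y * a n0 * b n1)) else 0))) has_real_derivative
     - ((suminf (\<lambda>n. if pa n then a n * exp (-((a n)^2)/2) else 0) *
         suminf (\<lambda>n. if pb n then b n * exp (-((b n)^2)/2) else 0)) *
        inverse ((suminf (\<lambda>n. if pa n then exp (-((a n)^2)/2) else 0) *
                  suminf (\<lambda>n. if pb n then exp (-((b n)^2)/2) else 0)) ^ Suc (Suc 0)))) (at 0)"
proof -
  define e0a where "e0a = (\<lambda>n. if pa n then exp (-((a n)^2)/2) else 0)"
  define e1a where "e1a = (\<lambda>n. if pa n then a n * exp (-((a n)^2)/2) else 0)"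
  define e2a where "e2a = (\<lambda>n. if pa n then (a n)^2 * exp (-((a n)^2)/(2*u)) else 0)"
  define e0b where "e0b = (\<lambda>n. if pb n then exp (-((b n)^2)/2) else 0)"
  define e1b where "e1b = (\<lambda>n. if pb n then b n * exp (-((b n)^2)/2) else 0)"
  define e2b where "e2b = (\<lambda>n. if pb n then (b n)^2 * exp (-((b n)^2)/(2*u)) else 0)"
  define g where "g = (\<lambda>y::real. \<lambda>(n0, n1). (if pa n0 \<and> pb n1 then
         exp (- (1/2) * ((a n0)^2 + (b n1)^2 - 2 * y * a n0 * b n1)) else 0))"
  define S where "S = (\<lambda>y. infsum (g y) UNIV)"
  define E0 where "E0 = (\<lambda>p::nat\<times>nat. case p of (x,z) \<Rightarrow> e0a x * e0b z)"
  define E1 where "E1 = (\<lambda>p::nat\<times>nat. case p of (x,z) \<Rightarrow> e1a x * e1b z)"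
  define E2 where "E2 = (\<lambda>p::nat\<times>nat. case p of (x,z) \<Rightarrow> e2a x * e2b z)"
  define R where "R = (\<lambda>y::real. \<lambda>p. g y p - E0 p - y * E1 p)"
  define d where "d = 1 - 1/u"
  define C where "C = suminf e2a * suminf e2b"
  have d0: "d > 0" unfolding d_def using u by (simp add: field_simps)
  have "(\<lambda>n. \<bar>e0a n\<bar>) = e0a" unfolding e0a_def by (auto intro!: ext)
  hence a0: "summable (\<lambda>n. \<bar>e0a n\<bar>)" using s0a unfolding e0a_def by simp
  have "(\<lambda>n. \<bar>e0b n\<bar>) = e0b" unfolding e0b_def by (auto intro!: ext)
  hence b0: "summable (\<lambda>n. \<bar>e0b n\<bar>)" using s0b unfolding e0b_def by simp
  have "(\<lambda>n. \<bar>e1a n\<bar>) = (\<lambda>n. if pa n then \<bar>a n\<bar> * exp (-((a n)^2)/2) else 0)"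
    unfolding e1a_def by (auto intro!: ext simp: abs_mult)
  hence a1: "summable (\<lambda>n. \<bar>e1a n\<bar>)" using s1a by simp
  have "(\<lambda>n. \<bar>e1b n\<bar>) = (\<lambda>n. if pb n then \<bar>b n\<bar> * exp (-((b n)^2)/2) else 0)"
    unfolding e1b_def by (auto intro!: ext simp: abs_mult)
  hence b1: "summable (\<lambda>n. \<bar>e1b n\<bar>)" using s1b by simp
  have "(\<lambda>n. \<bar>e2a n\<bar>) = e2a" unfolding e2a_def by (auto intro!: ext simp: abs_mult)
  hence a2: "summable (\<lambda>n. \<bar>e2a n\<bar>)" using s2a unfolding e2a_def by simp
  have "(\<lambda>n. \<bar>e2b n\<bar>) = e2b" unfolding e2b_def by (auto intro!: ext simp: abs_mult)
  hence b2: "summable (\<lambda>n. \<bar>e2b n\<bar>)" using s2b unfolding e2b_def by simp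
  note P0 = prod_summ[OF a0 b0, folded E0_def]
  note P1 = prod_summ[OF a1 b1, folded E1_def]
  note P2 = prod_summ[OF a2 b2, folded E2_def]
  have E2nn: "E2 p \<ge> 0" for p
    unfolding E2_def e2a_def e2b_def by (auto split: prod.splits)
  have RB: "\<bar>R y p\<bar> \<le> y^2 * E2 p" if y: "\<bar>y\<bar> \<le> d" for y p
  proof -
    obtain x z where p: "p = (x,z)" by (cases p)
    show ?thesis
    proof (cases "pa x \<and> pb z")
      case True
      thus ?thesis using pt_bound[OF u, of y "a x" "b z"] y unfolding d_def
        by (simp add: p R_def g_def E0_def E1_def E2_def e0a_def e0b_def e1a_def e1b_def e2a_def e2b_def)
    next
      case False
      thus ?thesis
        by (auto simp: p R_def g_def E0_def E1_def E2_def e0a_def e0b_def e1a_def e1b_def e2a_def e2b_def)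
    qed
  qed
  have RS: "R y summable_on UNIV" and RI: "\<bar>infsum (R y) UNIV\<bar> \<le> y^2 * C" if y: "\<bar>y\<bar> \<le> d" for y
  proof -
    have BS: "(\<lambda>p. y^2 * E2 p) summable_on UNIV" using summable_on_cmult_right[OF P2(1)] .
    have BI: "infsum (\<lambda>p. y^2 * E2 p) UNIV = y^2 * C"
      unfolding C_def using P2(2) by (simp add: infsum_cmult_right')
    have AS: "(\<lambda>p. \<bar>R y p\<bar>) summable_on UNIV"
      by (rule summable_on_comparison_test[OF BS]) (use RB[OF y] in auto)
    have AS': "(\<lambda>p. norm (R y p)) summable_on UNIV" using AS by simp
    show "R y summable_on UNIV" by (rule Infinite_Sum.abs_summable_summable[OF AS'])
    have "\<bar>infsum (R y) UNIV\<bar> \<le> infsum (\<lambda>p. norm (R y p)) UNIV"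
      using norm_infsum_bound[OF AS'] by simp
    also have "\<dots> \<le> infsum (\<lambda>p. y^2 * E2 p) UNIV"
      using AS' BS RB[OF y] by (intro infsum_mono) auto
    finally show "\<bar>infsum (R y) UNIV\<bar> \<le> y^2 * C" using BI by simp
  qed
  define Aa' where "Aa' = suminf e0a * suminf e0b"
  define Bb' where "Bb' = suminf e1a * suminf e1b"
  have SE: "S y = Aa' + y * Bb' + infsum (R y) UNIV" if y: "\<bar>y\<bar> \<le> d" for y
  proof -
    have "g y = (\<lambda>p. E0 p + y * E1 p + R y p)" unfolding R_def by auto
    hence "S y = infsum (\<lambda>p. E0 p + y * E1 p + R y p) UNIV" unfolding S_def by simp
    also have "\<dots> = infsum (\<lambda>p. E0 p + y * E1 p) UNIV + infsum (R y) UNIV"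
      using P0(1) P1(1) RS[OF y] by (intro infsum_add summable_on_add summable_on_cmult_right)
    also have "infsum (\<lambda>p. E0 p + y * E1 p) UNIV = infsum E0 UNIV + infsum (\<lambda>p. y * E1 p) UNIV"
      using P0(1) P1(1) by (intro infsum_add summable_on_cmult_right)
    also have "infsum (\<lambda>p. y * E1 p) UNIV = y * infsum E1 UNIV" by (simp add: infsum_cmult_right')
    finally show ?thesis using P0(2) P1(2) unfolding Aa'_def Bb'_def by simp
  qed
  have R0: "infsum (R 0) UNIV = 0" using RI[of 0] d0 by simp
  have S0: "S 0 = Aa'" using SE[of 0] d0 R0 by simp
  have Apos: "Aa' > 0" unfolding Aa'_def e0a_def e0b_def using Aa Ab by simp
  have "((\<lambda>y. (S y - S 0) / (y - 0) - Bb') \<longlongrightarrow> 0) (at 0)"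
  proof (rule Lim_null_comparison)
    show "eventually (\<lambda>y. norm ((S y - S 0) / (y - 0) - Bb') \<le> C * \<bar>y\<bar>) (at (0::real))"
      unfolding eventually_at
    proof (intro exI[of _ d] conjI d0 ballI impI)
      fix y :: real assume "y \<in> UNIV" "y \<noteq> 0 \<and> dist y 0 < d"
      hence y0: "y \<noteq> 0" and yd: "\<bar>y\<bar> \<le> d" by auto
      have "(S y - S 0) / (y - 0) - Bb' = infsum (R y) UNIV / y"
        using SE[OF yd] S0 y0 by (simp add: field_simps)
      hence "norm ((S y - S 0) / (y - 0) - Bb') = \<bar>infsum (R y) UNIV\<bar> / \<bar>y\<bar>" by (simp add: abs_divide)
      also have "\<dots> \<le> y^2 * C / \<bar>y\<bar>" using RI[OF yd] by (intro divide_right_mono) auto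
      also have "\<dots> = C * \<bar>y\<bar>" using y0 by (simp add: power2_eq_square field_simps)
      finally show "norm ((S y - S 0) / (y - 0) - Bb') \<le> C * \<bar>y\<bar>" .
    qed
    have "((\<lambda>y::real. C * \<bar>y\<bar>) \<longlongrightarrow> C * \<bar>0\<bar>) (at 0)" by (intro tendsto_intros)
    thus "((\<lambda>y::real. C * \<bar>y\<bar>) \<longlongrightarrow> 0) (at 0)" by simp
  qed
  hence "((\<lambda>y. (S y - S 0) / (y - 0)) \<longlongrightarrow> Bb') (at 0)" by (rule LIM_zero_cancel)
  hence D: "(S has_real_derivative Bb') (at 0)" by (simp add: has_field_derivative_iff)
  have "((\<lambda>y. inverse (S y)) has_real_derivative - (Bb' * inverse (S 0 ^ Suc (Suc 0)))) (at 0)"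
    using DERIV_inverse_fun[OF D] S0 Apos by simp
  thus ?thesis unfolding S_def g_def S0[unfolded S_def g_def] Aa'_def Bb'_def
    e0a_def e0b_def e1a_def e1b_def .
qed

lemma mterm0: "mterm P 0 1 i = (\<lambda>n. if Qfin P i n then exp (-((Qv P i n)^2)/2) else 0)"
  by (auto simp: mterm_def fun_eq_iff)
lemma mterm1: "mterm P 1 1 i = (\<lambda>n. if Qfin P i n then \<bar>Qv P i n\<bar> * exp (-((Qv P i n)^2)/2) else 0)"
  by (auto simp: mterm_def fun_eq_iff)
lemma mterm2: "mterm P 2 u i = (\<lambda>n. if Qfin P i n then (Qv P i n)^2 * exp (-((Qv P i n)^2)/(2*u)) else 0)"
  by (auto simp: mterm_def fun_eq_iff)

theorem mainTheorem10:
  fixes P :: "nat \<Rightarrow> nat pmf" and d :: nat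
  assumes summ: "\<forall>i\<in>{1..d}. \<exists>\<epsilon>>0. \<forall>u. \<bar>u - 1\<bar> < \<epsilon> \<longrightarrow>
                   (\<forall>k\<le>2. summable (\<lambda>n. mterm P k u i n))"
    and pos: "\<forall>i\<in>{1..d}. mfun P 0 1 i > 0"
  shows "psd_matrix d (\<lambda>i j. - deriv (zfun P i j) 0) \<and>
         (\<forall>i\<in>{1..d}. \<bar>deriv (zfun P i i) 0\<bar> \<le> (mfun P 1 1 i)^2 / (mfun P 0 1 i)^4)"
proof -
  define A where "A = (\<lambda>i. suminf (\<lambda>n. if Qfin P i n then exp (-((Qv P i n)^2)/2) else 0))"
  define B where "B = (\<lambda>i. suminf (\<lambda>n. if Qfin P i n then Qv P i n * exp (-((Qv P i n)^2)/2) else 0))"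
  have ex: "\<exists>e>0. \<forall>u. \<bar>u - 1\<bar> < e \<longrightarrow> (\<forall>k\<le>2. summable (\<lambda>n. mterm P k u i n))"
    if "i \<in> {1..d}" for i
    using summ that by (rule bspec)
  have s1: "summable (mterm P k 1 i)" if ii: "i \<in> {1..d}" and kk: "k \<le> 2" for i k
  proof -
    obtain e where e: "e > 0" "\<forall>u. \<bar>u - 1\<bar> < e \<longrightarrow> (\<forall>k\<le>2. summable (\<lambda>n. mterm P k u i n))"
      using ex[OF ii] by (elim exE conjE)
    have "summable (\<lambda>n. mterm P k 1 i n)" using e(2)[rule_format, of 1 k] e(1) kk by simp
    thus ?thesis by simp
  qed
  have Apos: "A i > 0" if "i \<in> {1..d}" for i
  proof -
    have "mfun P 0 1 i > 0" using pos that by (rule bspec)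
    hence "(1 / sqrt (2*pi)) * suminf (mterm P 0 1 i) > 0" unfolding mfun_def by simp
    hence "suminf (mterm P 0 1 i) > 0" by (simp add: zero_less_divide_iff)
    thus ?thesis unfolding A_def mterm0 .
  qed
  have DER: "deriv (zfun P i j) 0 = - (B i * B j * inverse ((A i * A j) ^ Suc (Suc 0)))"
    if i: "i \<in> {1..d}" and j: "j \<in> {1..d}" for i j
  proof -
    obtain ei where ei: "ei > 0" "\<forall>u. \<bar>u - 1\<bar> < ei \<longrightarrow> (\<forall>k\<le>2. summable (\<lambda>n. mterm P k u i n))"
      using ex[OF i] by (elim exE conjE)
    obtain ej where ej: "ej > 0" "\<forall>u. \<bar>u - 1\<bar> < ej \<longrightarrow> (\<forall>k\<le>2. summable (\<lambda>n. mterm P k u j n))"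
      using ex[OF j] by (elim exE conjE)
    define u where "u = 1 + min ei ej / 2"
    have u1: "u > 1" unfolding u_def using ei ej by simp
    have ui: "\<bar>u - 1\<bar> < ei" and uj: "\<bar>u - 1\<bar> < ej" unfolding u_def using ei ej by auto
    have "summable (\<lambda>n. mterm P 2 u i n)" using ei(2)[rule_format, OF ui, of 2] by simp
    hence s2i: "summable (mterm P 2 u i)" by simp
    have "summable (\<lambda>n. mterm P 2 u j n)" using ej(2)[rule_format, OF uj, of 2] by simp
    hence s2j: "summable (mterm P 2 u j)" by simp
    have a0: "summable (\<lambda>n. if Qfin P i n then exp (-((Qv P i n)^2)/2) else 0)"
      using s1[OF i, of 0] by (simp add: mterm0)
    have a1: "summable (\<lambda>n. if Qfin P i n then \<bar>Qv P i n\<bar> * exp (-((Qv P i n)^2)/2) else 0)"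
      using s1[OF i, of 1] unfolding mterm1 by simp
    have a2: "summable (\<lambda>n. if Qfin P i n then (Qv P i n)^2 * exp (-((Qv P i n)^2)/(2*u)) else 0)"
      using s2i by (simp add: mterm2)
    have b0: "summable (\<lambda>n. if Qfin P j n then exp (-((Qv P j n)^2)/2) else 0)"
      using s1[OF j, of 0] by (simp add: mterm0)
    have b1: "summable (\<lambda>n. if Qfin P j n then \<bar>Qv P j n\<bar> * exp (-((Qv P j n)^2)/2) else 0)"
      using s1[OF j, of 1] unfolding mterm1 by simp
    have b2: "summable (\<lambda>n. if Qfin P j n then (Qv P j n)^2 * exp (-((Qv P j n)^2)/(2*u)) else 0)"
      using s2j by (simp add: mterm2)
    have Ai: "suminf (\<lambda>n. if Qfin P i n then exp (-((Qv P i n)^2)/2) else 0) > 0"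
      using Apos[OF i] unfolding A_def .
    have Aj: "suminf (\<lambda>n. if Qfin P j n then exp (-((Qv P j n)^2)/2) else 0) > 0"
      using Apos[OF j] unfolding A_def .
    have "(zfun P i j has_real_derivative - (B i * B j * inverse ((A i * A j) ^ Suc (Suc 0)))) (at 0)"
      unfolding zfun_def[abs_def] A_def B_def
      by (rule core[OF u1 a0 a1 a2 b0 b1 b2 Ai Aj])
    thus ?thesis by (rule DERIV_imp_deriv)
  qed
  define v where "v = (\<lambda>i. B i * inverse ((A i)^2))"
  have M: "- deriv (zfun P i j) 0 = v i * v j" if "i \<in> {1..d}" "j \<in> {1..d}" for i j
    using DER[OF that] unfolding v_def by (simp add: power2_eq_square inverse_mult_distrib mult_ac)
  have psd: "psd_matrix d (\<lambda>i j. - deriv (zfun P i j) 0)"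
    unfolding psd_matrix_def
  proof (intro conjI ballI allI)
    fix i j assume "i \<in> {1..d}" "j \<in> {1..d}"
    thus "- deriv (zfun P i j) 0 = - deriv (zfun P j i) 0" using M by (simp add: mult.commute)
  next
    fix c :: "nat \<Rightarrow> real"
    have "(\<Sum>i=1..d. \<Sum>j=1..d. c i * - deriv (zfun P i j) 0 * c j) = (\<Sum>i=1..d. \<Sum>j=1..d. (c i * v i) * (c j * v j))"
      using M by (intro sum.cong refl) (simp add: algebra_simps)
    also have "\<dots> = (\<Sum>i=1..d. c i * v i) * (\<Sum>j=1..d. c j * v j)" by (simp add: sum_product)
    also have "\<dots> \<ge> 0" by simp
    finally show "0 \<le> (\<Sum>i=1..d. \<Sum>j=1..d. c i * - deriv (zfun P i j) 0 * c j)" by simp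
  qed
  have bnd: "\<bar>deriv (zfun P i i) 0\<bar> \<le> (mfun P 1 1 i)^2 / (mfun P 0 1 i)^4" if i: "i \<in> {1..d}" for i
  proof -
    define T where "T = suminf (mterm P 1 1 i)"
    define s where "s = sqrt (2*pi)"
    have s0: "s > 0" unfolding s_def by simp
    have s2: "s^2 = 2*pi" unfolding s_def by simp
    have Ai: "A i > 0" using Apos[OF i] .
    have sm: "summable (\<lambda>n. \<bar>if Qfin P i n then Qv P i n * exp (-((Qv P i n)^2)/2) else 0\<bar>)"
    proof -
      have "(\<lambda>n. \<bar>if Qfin P i n then Qv P i n * exp (-((Qv P i n)^2)/2) else 0\<bar>) = mterm P 1 1 i"
        unfolding mterm1 by (auto simp: fun_eq_iff abs_mult)
      thus ?thesis using s1[OF i, of 1] by simp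
    qed
    have BT: "\<bar>B i\<bar> \<le> T"
    proof -
      have "\<bar>B i\<bar> \<le> (\<Sum>n. \<bar>if Qfin P i n then Qv P i n * exp (-((Qv P i n)^2)/2) else 0\<bar>)"
        unfolding B_def by (rule summable_rabs[OF sm])
      also have "(\<lambda>n. \<bar>if Qfin P i n then Qv P i n * exp (-((Qv P i n)^2)/2) else 0\<bar>) = mterm P 1 1 i"
        unfolding mterm1 by (auto simp: fun_eq_iff abs_mult)
      finally show ?thesis unfolding T_def .
    qed
    have "\<bar>deriv (zfun P i i) 0\<bar> = (B i)^2 / (A i)^4"
    proof -
      have "deriv (zfun P i i) 0 = - ((B i)^2 / (A i)^4)" using DER[OF i i]
        by (simp add: power2_eq_square power4_eq_xxxx divide_inverse inverse_mult_distrib mult_ac)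
      thus ?thesis by simp
    qed
    also have "\<dots> \<le> T^2 / (A i)^4"
    proof (rule divide_right_mono)
      have "\<bar>B i\<bar>^2 \<le> T^2" using BT by (intro power_mono) auto
      thus "(B i)^2 \<le> T^2" by simp
    qed simp
    also have "\<dots> \<le> T^2 * s^2 / (A i)^4"
    proof (rule divide_right_mono)
      have "1 \<le> s^2" unfolding s2 using pi_gt3 by simp
      thus "T^2 \<le> T^2 * s^2" using mult_left_mono[of 1 "s^2" "T^2"] by simp
    qed simp
    also have "\<dots> = (mfun P 1 1 i)^2 / (mfun P 0 1 i)^4"
    proof -
      have m1: "mfun P 1 1 i = T / s" unfolding mfun_def T_def s_def by simp
      have m0: "mfun P 0 1 i = A i / s" unfolding mfun_def A_def s_def mterm0 by simp
      show ?thesis unfolding m1 m0 using s0 Ai by (simp add: field_simps power2_eq_square power4_eq_xxxx)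
    qed
    finally show ?thesis .
  qed
  show ?thesis using psd bnd by blast
qed

end
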